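(* Let $d,N\ge1$, $\epsilon\in(0,1]$, $\delta\ge0$ with $C_d\delta<1$, and $\beta\in(0,1/2]$ with $N\ge\ln(2d/\beta)$. Let $x(1),\dots,x(N)\in[-1,1]^d$ and let $x^*(i)=\mathcal{M}(x(i))$ be obtained by applying Mechanism-1 (with parameters $\epsilon,\delta$) independently to each $x(i)$. For $j\in\{1,\dots,d\}$ put $Z_j=\frac1N\sum_{i=1}^N x^*_j(i)$ and $X_j=\frac1N\sum_{i=1}^N x_j(i)$. Then with probability at least $1-\beta$, $$\max_{j\in\{1,\dots,d\}}|Z_j-X_j|=O\!\left(\frac{\sqrt{d\log(d/\beta)}}{(\epsilon+2^d\delta)\sqrt N}\right),$$ where the implied constant is absolute (independent of $d,N,\epsilon,\delta,\beta$ and the data).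
   Context: Let $C_d=2^{d-1}$ if $d$ is odd and $C_d=2^{d-1}-\frac12\binom{d}{d/2}$ if $d$ is even. For $B>0$ and $v\in\{-1,1\}^d$ let $T^+(v)=\{y\in\{-B,B\}^d: y\cdot v>0\}$, $T^-(v)=\{y\in\{-B,B\}^d: y\cdot v\le 0\}$. For $\alpha\in[0,1]$, $\mathcal{M}_{\alpha,B}$ takes $x\in[-1,1]^d$, samples $V\in\{-1,1\}^d$ with independent coordinates $\mathbb{P}[V_j=\pm1]=\frac12\pm\frac12x_j$, independently samples $u\in\{0,1\}$ with $\mathbb{P}[u=1]=\alpha$, and outputs a uniformly random element of $T^+(V)$ if $u=1$ and of $T^-(V)$ if $u=0$. Mechanism-1 with parameters $\epsilon>0,\delta\ge0$ is $\mathcal{M}=\mathcal{M}_{\alpha_{\epsilon,\delta},B_{\epsilon,\delta}}$ where $\alpha_{\epsilon,\delta}=\frac{e^\epsilon+C_d\delta}{e^\epsilon+1}$ if $d$ is odd and $\alpha_{\epsilon,\delta}=\frac{e^\epsilon C_d+\delta C_d(2^d-C_d)}{(e^\epsilon-1)C_d+2^d}$ if $d$ is even, and $B_{\epsilon,\delta}=\frac{2^d+C_d(e^\epsilon-1)}{\binom{d-1}{(d-1)/2}(e^\epsilon+2^d\delta-1)}$ if $d$ is odd, $B_{\epsilon,\delta}=\frac{2^d+C_d(e^\epsilon-1)}{\binom{d-1}{d/2}(e^\epsilon+2^d\delta-1)}$ if $d$ is even. *)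

theory Defs
  imports "HOL-Probability.Probability"
begin

(* Vectors in R^d are functions nat => real; coordinates j < d are meaningful,
   coordinates >= d are fixed to 0. *)

definition C_const :: "nat \<Rightarrow> real" where
  "C_const d = (if odd d then 2 ^ (d - 1)
                else 2 ^ (d - 1) - (1/2) * real (d choose (d div 2)))"

definition alpha_param :: "nat \<Rightarrow> real \<Rightarrow> real \<Rightarrow> real" where
  "alpha_param d \<epsilon> \<delta> = (if odd d
      then (exp \<epsilon> + C_const d * \<delta>) / (exp \<epsilon> + 1)
      else (exp \<epsilon> * C_const d + \<delta> * C_const d * (2 ^ d - C_const d))
           / ((exp \<epsilon> - 1) * C_const d + 2 ^ d))"

definition B_param :: "nat \<Rightarrow> real \<Rightarrow> real \<Rightarrow> real" where
  "B_param d \<epsilon> \<delta> = (if odd d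
      then (2 ^ d + C_const d * (exp \<epsilon> - 1))
           / (real ((d - 1) choose ((d - 1) div 2)) * (exp \<epsilon> + 2 ^ d * \<delta> - 1))
      else (2 ^ d + C_const d * (exp \<epsilon> - 1))
           / (real ((d - 1) choose (d div 2)) * (exp \<epsilon> + 2 ^ d * \<delta> - 1)))"

definition cube :: "nat \<Rightarrow> real \<Rightarrow> (nat \<Rightarrow> real) set" where
  "cube d B = PiE {0..<d} (\<lambda>_. {-B, B})"

definition T_plus :: "nat \<Rightarrow> real \<Rightarrow> (nat \<Rightarrow> real) \<Rightarrow> (nat \<Rightarrow> real) set" where
  "T_plus d B v = {y \<in> cube d B. (\<Sum>j<d. y j * v j) > 0}"

definition T_minus :: "nat \<Rightarrow> real \<Rightarrow> (nat \<Rightarrow> real) \<Rightarrow> (nat \<Rightarrow> real) set" where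
  "T_minus d B v = {y \<in> cube d B. (\<Sum>j<d. y j * v j) \<le> 0}"

definition sign_vec :: "nat \<Rightarrow> (nat \<Rightarrow> real) \<Rightarrow> (nat \<Rightarrow> real) pmf" where
  "sign_vec d x = Pi_pmf {0..<d} 0
     (\<lambda>j. map_pmf (\<lambda>b. if b then 1 else -1) (bernoulli_pmf (1/2 + x j / 2)))"

definition mech :: "nat \<Rightarrow> real \<Rightarrow> real \<Rightarrow> (nat \<Rightarrow> real) \<Rightarrow> (nat \<Rightarrow> real) pmf" where
  "mech d \<alpha> B x =
     do { V \<leftarrow> sign_vec d x;
          u \<leftarrow> bernoulli_pmf \<alpha>;
          pmf_of_set (if u then T_plus d B V else T_minus d B V) }"

definition mechanism1 :: "nat \<Rightarrow> real \<Rightarrow> real \<Rightarrow> (nat \<Rightarrow> real) \<Rightarrow> (nat \<Rightarrow> real) pmf" where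
  "mechanism1 d \<epsilon> \<delta> = mech d (alpha_param d \<epsilon> \<delta>) (B_param d \<epsilon> \<delta>)"

definition mechanism1_all ::
  "nat \<Rightarrow> nat \<Rightarrow> real \<Rightarrow> real \<Rightarrow> (nat \<Rightarrow> nat \<Rightarrow> real) \<Rightarrow> (nat \<Rightarrow> nat \<Rightarrow> real) pmf" where
  "mechanism1_all d N \<epsilon> \<delta> x = Pi_pmf {0..<N} (\<lambda>_. 0) (\<lambda>i. mechanism1 d \<epsilon> \<delta> (x i))"

definition coord_mean :: "nat \<Rightarrow> (nat \<Rightarrow> nat \<Rightarrow> real) \<Rightarrow> nat \<Rightarrow> real" where
  "coord_mean N x j = (\<Sum>i<N. x i j) / real N"

end

theory Submission
  imports Defs
begin


definition Aset :: "nat \<Rightarrow> nat set set" where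
  "Aset d = {P. P \<subseteq> {..<d} \<and> d < 2 * card P}"

definition gsgn :: "nat \<Rightarrow> nat set \<Rightarrow> real" where
  "gsgn j P = (if j \<in> P then 1 else -1)"

lemma finite_Aset: "finite (Aset d)"
  unfolding Aset_def by (rule finite_subset[of _ "Pow {..<d}"]) auto

lemma sum_Pow_split:
  fixes h :: "nat set \<Rightarrow> real"
  assumes j: "j < d"
  shows "(\<Sum>P\<in>Pow {..<d}. h P) = (\<Sum>Q\<in>Pow ({..<d} - {j}). h Q + h (insert j Q))"
proof -
  define D where "D = {..<d} - {j}"
  have eq: "{..<d} = insert j D" using j by (auto simp: D_def)
  have jD: "j \<notin> D" by (simp add: D_def)
  have fin: "finite D" by (simp add: D_def)
  have inj: "inj_on (insert j) (Pow D)"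
    using jD by (auto simp: inj_on_def)
  have disj: "Pow D \<inter> insert j ` Pow D = {}" using jD by auto
  have "(\<Sum>P\<in>Pow {..<d}. h P) = (\<Sum>P\<in>Pow D \<union> insert j ` Pow D. h P)"
    by (simp add: eq Pow_insert)
  also have "\<dots> = (\<Sum>P\<in>Pow D. h P) + (\<Sum>P\<in>insert j ` Pow D. h P)"
    by (rule sum.union_disjoint) (use fin disj in auto)
  also have "(\<Sum>P\<in>insert j ` Pow D. h P) = (\<Sum>Q\<in>Pow D. h (insert j Q))"
    by (subst sum.reindex[OF inj]) simp
  finally show ?thesis by (simp add: D_def sum.distrib)
qed

lemma card_insert_Pow:
  fixes d j :: nat
  assumes "Q \<in> Pow ({..<d} - {j})"
  shows "card (insert j Q) = Suc (card Q)"
proof -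
  have "Q \<subseteq> {..<d}" using assms by auto
  hence "finite Q" by (meson finite_lessThan finite_subset)
  moreover have "j \<notin> Q" using assms by auto
  ultimately show ?thesis by simp
qed

lemma sum_gsgn_Pow:
  assumes j: "j < d"
  shows "(\<Sum>P\<in>Pow {..<d}. gsgn j P) = 0"
proof -
  have "(\<Sum>P\<in>Pow {..<d}. gsgn j P) = (\<Sum>Q\<in>Pow ({..<d} - {j}). gsgn j Q + gsgn j (insert j Q))"
    by (rule sum_Pow_split[OF j])
  also have "\<dots> = (\<Sum>Q\<in>Pow ({..<d} - {j}). 0)"
    by (intro sum.cong) (auto simp: gsgn_def)
  finally show ?thesis by simp
qed

lemma sum_gsgn_Aset:
  assumes j: "j < d"
  shows "(\<Sum>P\<in>Aset d. gsgn j P) = real ((d - 1) choose (d div 2))"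
proof -
  define D where "D = {..<d} - {j}"
  have finD: "finite D" by (simp add: D_def)
  have cD: "card D = d - 1" using j by (simp add: D_def)
  have "(\<Sum>P\<in>Aset d. gsgn j P) = (\<Sum>P\<in>Pow {..<d}. if d < 2 * card P then gsgn j P else 0)"
    unfolding Aset_def by (subst sum.inter_filter[symmetric]) (auto intro!: sum.cong)
  also have "\<dots> = (\<Sum>Q\<in>Pow D. (if d < 2 * card Q then gsgn j Q else 0)
                  + (if d < 2 * card (insert j Q) then gsgn j (insert j Q) else 0))"
    unfolding D_def by (rule sum_Pow_split[OF j])
  also have "\<dots> = (\<Sum>Q\<in>Pow D. if card Q = d div 2 then 1 else 0)"
  proof (intro sum.cong refl)
    fix Q assume Q: "Q \<in> Pow D"
    have jQ: "j \<notin> Q" using Q by (auto simp: D_def)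
    have ci: "card (insert j Q) = Suc (card Q)" using Q card_insert_Pow unfolding D_def by blast
    show "(if d < 2 * card Q then gsgn j Q else 0) +
          (if d < 2 * card (insert j Q) then gsgn j (insert j Q) else 0) =
          (if card Q = d div 2 then 1 else 0)"
      using jQ unfolding ci gsgn_def by auto
  qed
  also have "\<dots> = real (card {Q. Q \<subseteq> D \<and> card Q = d div 2})"
    by (subst sum.If_cases) (auto simp: finD intro!: arg_cong[where f=card])
  also have "\<dots> = real ((d - 1) choose (d div 2))"
    by (simp add: n_subsets[OF finD] cD)
  finally show ?thesis .
qed

lemma card_Aset:
  "2 * card (Aset d) + (if even d then d choose (d div 2) else 0) = 2 ^ d"
proof -
  define Bl where "Bl = {P. P \<subseteq> {..<d} \<and> 2 * card P < d}"
  define E where "E = {P. P \<subseteq> {..<d} \<and> 2 * card P = d}"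
  have finPow: "finite (Pow {..<d})" by simp
  have part: "Pow {..<d} = Aset d \<union> (Bl \<union> E)"
    unfolding Aset_def Bl_def E_def by auto
  have cP: "card (Pow {..<d}) = 2 ^ d" by (simp add: card_Pow)
  have fA: "finite (Aset d)" by (rule finite_Aset)
  have fB: "finite Bl" unfolding Bl_def by (rule finite_subset[of _ "Pow {..<d}"]) auto
  have fE: "finite E" unfolding E_def by (rule finite_subset[of _ "Pow {..<d}"]) auto
  have "card (Pow {..<d}) = card (Aset d) + card (Bl \<union> E)"
    unfolding part by (rule card_Un_disjoint) (use fA fB fE in \<open>auto simp: Aset_def Bl_def E_def\<close>)
  also have "card (Bl \<union> E) = card Bl + card E"
    by (rule card_Un_disjoint) (use fB fE in \<open>auto simp: Bl_def E_def\<close>)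
  also have "card Bl = card (Aset d)"
  proof -
    have inj: "inj_on (\<lambda>P. {..<d} - P) (Aset d)"
      unfolding Aset_def inj_on_def by auto
    have img: "(\<lambda>P. {..<d} - P) ` Aset d = Bl"
    proof
      show "(\<lambda>P. {..<d} - P) ` Aset d \<subseteq> Bl"
      proof
        fix Q assume "Q \<in> (\<lambda>P. {..<d} - P) ` Aset d"
        then obtain P where P: "P \<in> Aset d" "Q = {..<d} - P" by auto
        have fP: "finite P" using P by (auto simp: Aset_def intro: finite_subset)
        have "card Q = d - card P" using P card_Diff_subset[OF fP] by (simp add: Aset_def)
        moreover have "card P \<le> d" using P card_mono[of "{..<d}" P] by (auto simp: Aset_def)
        ultimately show "Q \<in> Bl" using P by (auto simp: Bl_def Aset_def)
      qed
    next
      show "Bl \<subseteq> (\<lambda>P. {..<d} - P) ` Aset d"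
      proof
        fix Q assume Q: "Q \<in> Bl"
        have fQ: "finite Q" using Q by (auto simp: Bl_def intro: finite_subset)
        have "card ({..<d} - Q) = d - card Q" using Q card_Diff_subset[OF fQ] by (simp add: Bl_def)
        hence "{..<d} - Q \<in> Aset d" using Q by (auto simp: Bl_def Aset_def)
        moreover have "Q = {..<d} - ({..<d} - Q)" using Q by (auto simp: Bl_def)
        ultimately show "Q \<in> (\<lambda>P. {..<d} - P) ` Aset d" by blast
      qed
    qed
    show ?thesis using card_image[OF inj] img by simp
  qed
  also have "card E = (if even d then d choose (d div 2) else 0)"
  proof (cases "even d")
    case True
    have "E = {P. P \<subseteq> {..<d} \<and> card P = d div 2}" using True by (auto simp: E_def)
    thus ?thesis using True by (simp add: n_subsets)
  next
    case False
    have "E = {}" using False by (auto simp: E_def)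
    thus ?thesis using False by simp
  qed
  finally show ?thesis using cP by simp
qed


definition phi :: "nat \<Rightarrow> real \<Rightarrow> (nat \<Rightarrow> real) \<Rightarrow> nat set \<Rightarrow> nat \<Rightarrow> real" where
  "phi d B v P = (\<lambda>k. if k < d then (if k \<in> P then B * v k else - (B * v k)) else undefined)"

locale cubeloc =
  fixes d :: nat and B :: real and v :: "nat \<Rightarrow> real"
  assumes Bpos: "B > 0" and vsign: "\<And>k. k < d \<Longrightarrow> v k = 1 \<or> v k = -1"
begin

lemma phi_in_cube: "phi d B v P \<in> cube d B"
proof -
  have h: "\<forall>k<d. B * v k \<in> {-B,B} \<and> -(B * v k) \<in> {-B,B}" using vsign by force
  show ?thesis unfolding cube_def phi_def PiE_def extensional_def using h by (auto simp: atLeast0LessThan)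
qed

lemma inj_phi: "inj_on (phi d B v) (Pow {..<d})"
proof (rule inj_onI)
  fix P Q assume P: "P \<in> Pow {..<d}" and Q: "Q \<in> Pow {..<d}" and eq: "phi d B v P = phi d B v Q"
  show "P = Q"
  proof (rule set_eqI)
    fix k
    show "k \<in> P \<longleftrightarrow> k \<in> Q"
    proof (cases "k < d")
      case True
      have "phi d B v P k = phi d B v Q k" using eq by simp
      moreover have "B * v k \<noteq> - (B * v k)" using Bpos vsign[OF True] by auto
      ultimately show ?thesis using True unfolding phi_def by (auto split: if_splits)
    next
      case False thus ?thesis using P Q by auto
    qed
  qed
qed

lemma cube_eq: "cube d B = phi d B v ` Pow {..<d}"
proof
  show "phi d B v ` Pow {..<d} \<subseteq> cube d B" using phi_in_cube by auto
next
  show "cube d B \<subseteq> phi d B v ` Pow {..<d}"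
  proof
    fix y assume y: "y \<in> cube d B"
    define P where "P = {k. k < d \<and> y k = B * v k}"
    have "y = phi d B v P"
    proof
      fix k
      show "y k = phi d B v P k"
      proof (cases "k < d")
        case True
        have "y k = B \<or> y k = -B" using y True by (auto simp: cube_def PiE_def Pi_def atLeast0LessThan)
        thus ?thesis using vsign[OF True] True Bpos by (auto simp: phi_def P_def)
      next
        case False
        thus ?thesis using y by (auto simp: phi_def cube_def PiE_def extensional_def atLeast0LessThan)
      qed
    qed
    moreover have "P \<in> Pow {..<d}" by (auto simp: P_def)
    ultimately show "y \<in> phi d B v ` Pow {..<d}" by blast
  qed
qed

lemma dot_phi:
  assumes P: "P \<subseteq> {..<d}"
  shows "(\<Sum>k<d. phi d B v P k * v k) = B * (2 * real (card P) - real d)"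
proof -
  have "(\<Sum>k<d. phi d B v P k * v k) = (\<Sum>k<d. if k \<in> P then B else - B)"
  proof (intro sum.cong refl)
    fix k assume k: "k \<in> {..<d}"
    have "v k * v k = 1" using vsign[of k] k by auto
    thus "phi d B v P k * v k = (if k \<in> P then B else - B)"
      using k by (auto simp: phi_def algebra_simps)
  qed
  also have "\<dots> = B * real (card ({..<d} \<inter> P)) - B * real (card ({..<d} - P))"
    by (subst sum.If_cases) (auto simp: Diff_eq)
  also have "{..<d} \<inter> P = P" using P by auto
  also have "card ({..<d} - P) = d - card P"
    using P by (subst card_Diff_subset) (auto intro: finite_subset)
  also have "real (d - card P) = real d - real (card P)"
    using P card_mono[of "{..<d}" P] by (subst of_nat_diff) auto
  finally show ?thesis by (simp add: algebra_simps)
qed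

lemma T_plus_eq: "T_plus d B v = phi d B v ` Aset d"
proof -
  have "T_plus d B v = {y \<in> phi d B v ` Pow {..<d}. (\<Sum>j<d. y j * v j) > 0}"
    unfolding T_plus_def cube_eq ..
  also have "\<dots> = phi d B v ` {P \<in> Pow {..<d}. (\<Sum>j<d. phi d B v P j * v j) > 0}" by auto
  also have "{P \<in> Pow {..<d}. (\<Sum>j<d. phi d B v P j * v j) > 0} = Aset d"
    using Bpos by (auto simp: dot_phi Aset_def zero_less_mult_iff)
  finally show ?thesis .
qed

lemma T_minus_eq: "T_minus d B v = phi d B v ` (Pow {..<d} - Aset d)"
proof -
  have "T_minus d B v = {y \<in> phi d B v ` Pow {..<d}. (\<Sum>j<d. y j * v j) \<le> 0}"
    unfolding T_minus_def cube_eq ..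
  also have "\<dots> = phi d B v ` {P \<in> Pow {..<d}. (\<Sum>j<d. phi d B v P j * v j) \<le> 0}" by auto
  also have "{P \<in> Pow {..<d}. (\<Sum>j<d. phi d B v P j * v j) \<le> 0} = Pow {..<d} - Aset d"
    using Bpos by (auto simp: dot_phi Aset_def mult_le_0_iff)
  finally show ?thesis .
qed

lemma Aset_sub: "Aset d \<subseteq> Pow {..<d}" by (auto simp: Aset_def)

lemma card_T_plus: "card (T_plus d B v) = card (Aset d)"
  unfolding T_plus_eq by (rule card_image) (rule inj_on_subset[OF inj_phi Aset_sub])

lemma card_T_minus: "card (T_minus d B v) = 2 ^ d - card (Aset d)"
proof -
  have "card (T_minus d B v) = card (Pow {..<d} - Aset d)"
    unfolding T_minus_eq by (rule card_image) (auto intro: inj_on_subset[OF inj_phi])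
  also have "\<dots> = 2 ^ d - card (Aset d)"
    using Aset_sub by (subst card_Diff_subset) (auto simp: card_Pow intro: finite_subset)
  finally show ?thesis .
qed

lemma phi_j: "j < d \<Longrightarrow> phi d B v P j = B * v j * gsgn j P"
  by (simp add: phi_def gsgn_def)

lemma sum_T_plus:
  assumes j: "j < d"
  shows "(\<Sum>y\<in>T_plus d B v. y j) = B * v j * real ((d - 1) choose (d div 2))"
proof -
  have "(\<Sum>y\<in>T_plus d B v. y j) = (\<Sum>P\<in>Aset d. phi d B v P j)"
    unfolding T_plus_eq by (rule sum.reindex[OF inj_on_subset[OF inj_phi Aset_sub], unfolded o_def])
  also have "\<dots> = B * v j * (\<Sum>P\<in>Aset d. gsgn j P)"
    by (simp add: phi_j[OF j] sum_distrib_left)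
  finally show ?thesis by (simp add: sum_gsgn_Aset[OF j])
qed

lemma sum_T_minus:
  assumes j: "j < d"
  shows "(\<Sum>y\<in>T_minus d B v. y j) = - (B * v j * real ((d - 1) choose (d div 2)))"
proof -
  have "(\<Sum>y\<in>T_minus d B v. y j) = (\<Sum>P\<in>Pow {..<d} - Aset d. phi d B v P j)"
    unfolding T_minus_eq by (rule sum.reindex[OF inj_on_subset[OF inj_phi], unfolded o_def]) (auto simp: Diff_eq)
  also have "\<dots> = B * v j * (\<Sum>P\<in>Pow {..<d} - Aset d. gsgn j P)"
    by (simp add: phi_j[OF j] sum_distrib_left)
  also have "(\<Sum>P\<in>Pow {..<d} - Aset d. gsgn j P) = (\<Sum>P\<in>Pow {..<d}. gsgn j P) - (\<Sum>P\<in>Aset d. gsgn j P)"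
    using Aset_sub by (subst sum_diff) auto
  finally show ?thesis by (simp add: sum_gsgn_Aset[OF j] sum_gsgn_Pow[OF j])
qed

end


lemma expectation_bind_pmf_fin:
  fixes h :: "'b \<Rightarrow> real"
  assumes fin: "finite (set_pmf p)"
    and fin2: "\<And>a. a \<in> set_pmf p \<Longrightarrow> finite (set_pmf (f a))"
    and eq: "\<And>a. a \<in> set_pmf p \<Longrightarrow> measure_pmf.expectation (f a) h = g a"
  shows "measure_pmf.expectation (bind_pmf p f) h = measure_pmf.expectation p g"
proof -
  have "measure_pmf.expectation (bind_pmf p f) h =
        (\<Sum>a\<in>set_pmf p. pmf p a *\<^sub>R measure_pmf.expectation (f a) h)"
    by (rule pmf_expectation_bind) (use fin fin2 in auto)
  also have "\<dots> = (\<Sum>a\<in>set_pmf p. g a * pmf p a)"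
    by (intro sum.cong) (auto simp: eq)
  also have "\<dots> = measure_pmf.expectation p g"
    by (rule integral_measure_pmf_real[symmetric]) (use fin in auto)
  finally show ?thesis .
qed

lemma set_sign_vec:
  "set_pmf (sign_vec d x) \<subseteq> PiE_dflt {0..<d} 0 (\<lambda>_. {1, -1})"
  unfolding sign_vec_def by (subst set_Pi_pmf) (auto simp: PiE_dflt_def)

lemma finite_set_sign_vec: "finite (set_pmf (sign_vec d x))"
  by (rule finite_subset[OF set_sign_vec]) auto

lemma sign_vec_vals: "V \<in> set_pmf (sign_vec d x) \<Longrightarrow> k < d \<Longrightarrow> V k = 1 \<or> V k = -1"
  using set_sign_vec[of d x] by (auto simp: PiE_dflt_def)

lemma expect_sign_vec:
  assumes j: "j < d" and x: "-1 \<le> x j" "x j \<le> 1"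
  shows "measure_pmf.expectation (sign_vec d x) (\<lambda>V. V j) = x j"
proof -
  have "measure_pmf.expectation (sign_vec d x) (\<lambda>V. V j) =
        measure_pmf.expectation (map_pmf (\<lambda>V. V j) (sign_vec d x)) (\<lambda>r. r)"
    by simp
  also have "map_pmf (\<lambda>V. V j) (sign_vec d x) =
        map_pmf (\<lambda>b. if b then 1 else -1) (bernoulli_pmf (1/2 + x j / 2))"
    unfolding sign_vec_def using j by (subst Pi_pmf_component) auto
  also have "measure_pmf.expectation \<dots> (\<lambda>r. r) = x j"
    using x by simp
  finally show ?thesis .
qed

context
  fixes d :: nat and \<alpha> B :: real and x :: "nat \<Rightarrow> real" and j :: nat
  assumes d1: "d \<ge> 1" and j: "j < d" and Bpos: "B > 0" and a0: "0 \<le> \<alpha>" and a1: "\<alpha> \<le> 1"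
    and xj: "-1 \<le> x j" "x j \<le> 1"
    and key: "\<alpha> * (B * real ((d - 1) choose (d div 2)) / real (card (Aset d)))
              - (1 - \<alpha>) * (B * real ((d - 1) choose (d div 2)) / (2 ^ d - real (card (Aset d)))) = 1"
begin

lemma mech_inner:
  assumes V: "V \<in> set_pmf (sign_vec d x)"
  shows "measure_pmf.expectation (bind_pmf (bernoulli_pmf \<alpha>)
            (\<lambda>u. pmf_of_set (if u then T_plus d B V else T_minus d B V))) (\<lambda>y. y j) = V j"
proof -
  interpret cubeloc d B V
    by unfold_locales (use Bpos sign_vec_vals[OF V] in auto)
  define m where "m = real ((d - 1) choose (d div 2))"
  define c where "c = real (card (Aset d))"
  have AP: "{..<d} \<in> Aset d" using d1 by (auto simp: Aset_def)
  have AM: "{} \<in> Pow {..<d} - Aset d" by (auto simp: Aset_def)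
  have fincube: "finite (cube d B)" unfolding cube_eq by simp
  have Tp: "T_plus d B V \<noteq> {}" "finite (T_plus d B V)"
    using AP by (auto simp: T_plus_eq finite_Aset)
  have Tm: "T_minus d B V \<noteq> {}" "finite (T_minus d B V)"
    using AM by (auto simp: T_minus_eq)
  have cp: "real (card (T_plus d B V)) = c" by (simp add: card_T_plus c_def)
  have cm: "real (card (T_minus d B V)) = 2 ^ d - c"
  proof -
    have "card (Aset d) \<le> 2 ^ d" using card_Aset[of d] by linarith
    thus ?thesis by (simp add: card_T_minus c_def of_nat_diff)
  qed
  have Ep: "measure_pmf.expectation (pmf_of_set (T_plus d B V)) (\<lambda>y. y j) = B * V j * m / c"
    using Tp by (simp add: integral_pmf_of_set sum_T_plus[OF j] cp m_def)
  have Em: "measure_pmf.expectation (pmf_of_set (T_minus d B V)) (\<lambda>y. y j) = - (B * V j * m) / (2 ^ d - c)"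
    using Tm by (simp add: integral_pmf_of_set sum_T_minus[OF j] cm m_def)
  have "measure_pmf.expectation (bind_pmf (bernoulli_pmf \<alpha>)
            (\<lambda>u. pmf_of_set (if u then T_plus d B V else T_minus d B V))) (\<lambda>y. y j)
        = measure_pmf.expectation (bernoulli_pmf \<alpha>) (\<lambda>u. if u then B * V j * m / c else - (B * V j * m) / (2 ^ d - c))"
    by (rule expectation_bind_pmf_fin) (use Tp Tm Ep Em in auto)
  also have "\<dots> = \<alpha> * (B * V j * m / c) + (1 - \<alpha>) * (- (B * V j * m) / (2 ^ d - c))"
    using a0 a1 by (simp add: mult.commute)
  also have "\<dots> = V j * (\<alpha> * (B * m / c) - (1 - \<alpha>) * (B * m / (2 ^ d - c)))"
    by (simp add: algebra_simps)
  also have "\<dots> = V j" using key by (simp add: m_def c_def)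
  finally show ?thesis .
qed

lemma mech_expect: "measure_pmf.expectation (mech d \<alpha> B x) (\<lambda>y. y j) = x j"
proof -
  have "measure_pmf.expectation (mech d \<alpha> B x) (\<lambda>y. y j) = measure_pmf.expectation (sign_vec d x) (\<lambda>V. V j)"
    unfolding mech_def
  proof (rule expectation_bind_pmf_fin[OF finite_set_sign_vec])
    fix V assume V: "V \<in> set_pmf (sign_vec d x)"
    show "measure_pmf.expectation (bernoulli_pmf \<alpha> \<bind> (\<lambda>u. pmf_of_set (if u then T_plus d B V else T_minus d B V))) (\<lambda>y. y j) = V j"
      using mech_inner[OF V] .
    interpret cubeloc d B V
      by unfold_locales (use Bpos sign_vec_vals[OF V] in auto)
    have AP: "{..<d} \<in> Aset d" using d1 by (auto simp: Aset_def)
    have AM: "{} \<in> Pow {..<d} - Aset d" by (auto simp: Aset_def)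
    have Tp: "T_plus d B V \<noteq> {}" "finite (T_plus d B V)"
      using AP by (auto simp: T_plus_eq finite_Aset)
    have Tm: "T_minus d B V \<noteq> {}" "finite (T_minus d B V)"
      using AM by (auto simp: T_minus_eq)
    have "set_pmf (bernoulli_pmf \<alpha> \<bind> (\<lambda>u. pmf_of_set (if u then T_plus d B V else T_minus d B V)))
          \<subseteq> T_plus d B V \<union> T_minus d B V"
      using Tp Tm by (auto simp: set_bind_pmf split: if_splits)
    thus "finite (set_pmf (bernoulli_pmf \<alpha> \<bind> (\<lambda>u. pmf_of_set (if u then T_plus d B V else T_minus d B V))))"
      by (rule finite_subset) (use Tp Tm in auto)
  qed
  also have "\<dots> = x j" using expect_sign_vec[of j d x] j xj by simp
  finally show ?thesis .
qed

end


lemma cbin_step: "(2*k+2 choose (k+1)) * (k+1) = 2*(2*k+1)*(2*k choose k)"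
proof -
  have h1: "Suc k * (Suc (2*k+1) choose Suc k) = Suc (2*k+1) * ((2*k+1) choose k)"
    by (rule Suc_times_binomial)
  have sym: "(2*k+1) choose k = (2*k+1) choose (k+1)"
    using binomial_symmetric[of k "2*k+1"] by (simp add: numeral_2_eq_2)
  have h2: "Suc k * (Suc (2*k) choose Suc k) = Suc (2*k) * (2*k choose k)"
    by (rule Suc_times_binomial)
  have "(k+1) * ((2*k+2 choose (k+1)) * (k+1)) = (k+1) * (2*(2*k+1)*(2*k choose k))"
  proof -
    have "(k+1) * ((2*k+2 choose (k+1)) * (k+1)) = (2*k+2) * ((k+1) * ((2*k+1) choose (k+1)))"
      using h1 sym by (simp add: algebra_simps)
    also have "(k+1) * ((2*k+1) choose (k+1)) = (2*k+1) * (2*k choose k)"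
      using h2 by simp
    finally show ?thesis by (simp add: algebra_simps)
  qed
  thus ?thesis using mult_left_cancel[of "k+1::nat"] by (simp del: binomial_Suc_Suc)
qed

lemma cbin: "(16::real) ^ k \<le> real (2*k choose k) ^ 2 * (4 * real k + 1)"
proof (induction k)
  case 0 then show ?case by simp
next
  case (Suc k)
  define b where "b = real (2*k choose k)"
  define b' where "b' = real (2*(Suc k) choose (Suc k))"
  have rel: "b' * (real k + 1) = 2 * (2 * real k + 1) * b"
    using arg_cong[OF cbin_step[of k], of real] by (simp add: b_def b'_def algebra_simps)
  have IH: "16 ^ k \<le> b ^ 2 * (4 * real k + 1)" using Suc.IH by (simp add: b_def)
  have poly: "16 * (real k + 1)^2 * (4 * real k + 1) \<le> 4 * (2 * real k + 1)^2 * (4 * real k + 5)"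
    by (simp add: power2_eq_square algebra_simps)
  have "(real k + 1)^2 * 16 ^ Suc k = 16 * (real k + 1)^2 * 16 ^ k" by simp
  also have "\<dots> \<le> 16 * (real k + 1)^2 * (b ^ 2 * (4 * real k + 1))"
    by (rule mult_left_mono[OF IH]) simp
  also have "\<dots> = (16 * (real k + 1)^2 * (4 * real k + 1)) * b^2" by simp
  also have "\<dots> \<le> (4 * (2 * real k + 1)^2 * (4 * real k + 5)) * b^2"
    by (rule mult_right_mono[OF poly]) simp
  also have "\<dots> = (b' * (real k + 1))^2 * (4 * real k + 5)"
  proof -
    have "(b' * (real k + 1))^2 = (2 * (2 * real k + 1) * b)^2" by (simp only: rel)
    thus ?thesis by (simp add: power2_eq_square algebra_simps)
  qed
  also have "\<dots> = (real k + 1)^2 * (b'^2 * (4 * real (Suc k) + 1))"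
    by (simp add: power_mult_distrib)
  finally have "(real k + 1)^2 * 16 ^ Suc k \<le> (real k + 1)^2 * (b'^2 * (4 * real (Suc k) + 1))" .
  moreover have "(real k + 1)^2 > 0" by simp
  ultimately have "16 ^ Suc k \<le> b'^2 * (4 * real (Suc k) + 1)"
    by (simp add: mult_le_cancel_left_pos)
  thus ?case by (simp add: b'_def)
qed

lemma p16: "(4::real)^k * 4^k = 16^k"
  by (simp add: power_mult_distrib[symmetric])

lemma ratio_bound:
  assumes d: "d \<ge> 1"
  shows "(2 ^ d :: real) ^ 2 \<le> 32 * real d * real ((d - 1) choose (d div 2)) ^ 2"
proof (cases "odd d")
  case True
  then obtain k where k: "d = 2*k+1" by (metis oddE)
  have m: "(d - 1) choose (d div 2) = 2*k choose k" using k by simp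
  define b where "b = real (2*k choose k)"
  have "(2 ^ d :: real) ^ 2 = 4 * 16 ^ k" using k by (simp add: power_mult power_add power2_eq_square p16)
  also have "\<dots> \<le> 4 * (b ^ 2 * (4 * real k + 1))" using cbin[of k] by (simp add: b_def)
  also have "\<dots> = (4 * (4 * real k + 1)) * b^2" by simp
  also have "\<dots> \<le> (32 * real d) * b^2"
    by (rule mult_right_mono) (use k in simp_all)
  finally have "(2 ^ d :: real) ^ 2 \<le> 32 * real d * b^2" .
  thus ?thesis unfolding m b_def .
next
  case False
  then obtain k' where k': "d = 2*k'" by (auto elim: evenE)
  define k where "k = k' - 1"
  have k: "d = 2*k+2" using k' d by (simp add: k_def)
  have m: "(d - 1) choose (d div 2) = (2*k+1) choose (k+1)" using k by simp
  define b where "b = real (2*k choose k)"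
  define b' where "b' = real ((2*k+1) choose (k+1))"
  have mge: "b \<le> b'" by (simp add: b_def b'_def)
  have "(2 ^ d :: real) ^ 2 = 16 * 16 ^ k" using k by (simp add: power_mult power_add power2_eq_square p16)
  also have "\<dots> \<le> 16 * (b ^ 2 * (4 * real k + 1))" using cbin[of k] by (simp add: b_def)
  also have "\<dots> = (16 * (4 * real k + 1)) * b^2" by simp
  also have "\<dots> \<le> (16 * (4 * real k + 1)) * b'^2"
    by (rule mult_left_mono) (use mge in \<open>auto intro: power_mono simp: b_def\<close>)
  also have "\<dots> \<le> (32 * real d) * b'^2"
    by (rule mult_right_mono) (use k in simp_all)
  finally have "(2 ^ d :: real) ^ 2 \<le> 32 * real d * b'^2" .
  thus ?thesis unfolding m b'_def .
qed


definition ccA :: "nat \<Rightarrow> real" where "ccA d = real (card (Aset d))"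
definition mmA :: "nat \<Rightarrow> real" where "mmA d = real ((d - 1) choose (d div 2))"

context
  fixes d :: nat and \<epsilon> \<delta> :: real
  assumes d1: "d \<ge> 1" and e0: "0 < \<epsilon>" and dl0: "0 \<le> \<delta>" and Cd: "C_const d * \<delta> < 1"
begin

abbreviation "cc \<equiv> ccA d"
abbreviation "mm \<equiv> mmA d"

lemma C_eq: "C_const d = cc"
proof -
  have h: "2 * card (Aset d) + (if even d then d choose (d div 2) else 0) = 2 ^ d" by (rule card_Aset)
  have p: "(2::real) ^ d = 2 * 2 ^ (d - 1)" using d1 by (simp add: power_eq_if)
  show ?thesis
  proof (cases "even d")
    case True
    have "2 * cc + real (d choose (d div 2)) = 2 ^ d" using arg_cong[OF h, of real] True by (simp add: ccA_def)
    thus ?thesis using True p by (simp add: C_const_def)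
  next
    case False
    have "2 * cc = 2 ^ d" using arg_cong[OF h, of real] False by (simp add: ccA_def)
    thus ?thesis using False p by (simp add: C_const_def)
  qed
qed

lemma ccA_pos: "0 < cc"
proof -
  have "{..<d} \<in> Aset d" using d1 by (auto simp: Aset_def)
  hence "card (Aset d) > 0" using finite_Aset by (auto simp: card_gt_0_iff)
  thus ?thesis by (simp add: ccA_def)
qed

lemma ccA_half: "2 * cc \<le> 2 ^ d"
proof -
  have h: "2 * card (Aset d) + (if even d then d choose (d div 2) else 0) = 2 ^ d" by (rule card_Aset)
  hence "2 * card (Aset d) \<le> 2 ^ d" by linarith
  hence "real (2 * card (Aset d)) \<le> real (2 ^ d)" by (rule of_nat_mono)
  thus ?thesis by (simp add: ccA_def)
qed

lemma ccA_lt: "cc < 2 ^ d" using ccA_half ccA_pos by linarith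

lemma mmA_pos: "0 < mm"
  unfolding mmA_def using d1 by (simp add: zero_less_binomial_iff)

lemma alpha_eq: "alpha_param d \<epsilon> \<delta> = (exp \<epsilon> * cc + \<delta> * cc * (2 ^ d - cc)) / ((exp \<epsilon> - 1) * cc + 2 ^ d)"
proof (cases "odd d")
  case True
  have c2: "2 * cc = 2 ^ d"
  proof -
    have h: "2 * card (Aset d) + (if even d then d choose (d div 2) else 0) = 2 ^ d" by (rule card_Aset)
    show ?thesis using arg_cong[OF h, of real] True by (simp add: ccA_def)
  qed
  have "(exp \<epsilon> * cc + \<delta> * cc * (2 ^ d - cc)) / ((exp \<epsilon> - 1) * cc + 2 ^ d)
        = (cc * (exp \<epsilon> + \<delta> * cc)) / (cc * (exp \<epsilon> + 1))"
    using c2 by (simp add: c2[symmetric] algebra_simps)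
  also have "\<dots> = (exp \<epsilon> + \<delta> * cc) / (exp \<epsilon> + 1)" using ccA_pos by simp
  finally show ?thesis using True by (simp add: alpha_param_def C_eq mult.commute)
next
  case False
  thus ?thesis by (simp add: alpha_param_def C_eq mult.commute)
qed

lemma B_eq: "B_param d \<epsilon> \<delta> = (2 ^ d + cc * (exp \<epsilon> - 1)) / (mm * (exp \<epsilon> + 2 ^ d * \<delta> - 1))"
proof (cases "odd d")
  case True
  hence "(d - 1) div 2 = d div 2" by (auto elim: oddE)
  thus ?thesis using True by (simp add: B_param_def C_eq mmA_def)
next
  case False
  thus ?thesis by (simp add: B_param_def C_eq mmA_def)
qed

lemma E_pos: "exp \<epsilon> - 1 + 2 ^ d * \<delta> > 0"
proof -
  have "exp \<epsilon> > 1" using e0 by simp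
  moreover have "2 ^ d * \<delta> \<ge> 0" using dl0 by simp
  ultimately show ?thesis by linarith
qed

lemma B_pos: "B_param d \<epsilon> \<delta> > 0"
proof -
  have "exp \<epsilon> > 1" using e0 by simp
  hence "2 ^ d + cc * (exp \<epsilon> - 1) > 0" using ccA_pos by (simp add: add_pos_pos)
  moreover have "mm * (exp \<epsilon> + 2 ^ d * \<delta> - 1) > 0" using mmA_pos E_pos by simp
  ultimately show ?thesis by (simp add: B_eq)
qed

lemma alpha_nonneg: "0 \<le> alpha_param d \<epsilon> \<delta>"
proof -
  have "exp \<epsilon> > 1" using e0 by simp
  hence "(exp \<epsilon> - 1) * cc + 2 ^ d > 0" using ccA_pos by (simp add: add_pos_pos)
  moreover have "exp \<epsilon> * cc + \<delta> * cc * (2 ^ d - cc) \<ge> 0" using ccA_pos ccA_lt dl0 by simp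
  ultimately show ?thesis by (simp add: alpha_eq)
qed

lemma alpha_le1: "alpha_param d \<epsilon> \<delta> \<le> 1"
proof -
  have "exp \<epsilon> > 1" using e0 by simp
  hence D: "(exp \<epsilon> - 1) * cc + 2 ^ d > 0" using ccA_pos by (simp add: add_pos_pos)
  have dc: "\<delta> * cc \<le> 1" using Cd C_eq by (simp add: mult.commute)
  have "\<delta> * cc * (2 ^ d - cc) \<le> 1 * (2 ^ d - cc)"
    by (rule mult_right_mono[OF dc]) (use ccA_lt in simp)
  hence "exp \<epsilon> * cc + \<delta> * cc * (2 ^ d - cc) \<le> (exp \<epsilon> - 1) * cc + 2 ^ d"
    by (simp add: algebra_simps)
  thus ?thesis using D by (simp add: alpha_eq)
qed

lemma key_eq:
  "alpha_param d \<epsilon> \<delta> * (B_param d \<epsilon> \<delta> * mm / cc)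
   - (1 - alpha_param d \<epsilon> \<delta>) * (B_param d \<epsilon> \<delta> * mm / (2 ^ d - cc)) = 1"
proof -
  define e where "e = exp \<epsilon>"
  define T :: real where "T = 2 ^ d"
  define D where "D = (e - 1) * cc + T"
  define E where "E = e - 1 + T * \<delta>"
  have e1: "e > 1" using e0 by (simp add: e_def)
  have Dp: "D > 0" using e1 ccA_pos by (simp add: D_def T_def add_pos_pos)
  have Ep: "E > 0" using E_pos by (simp add: E_def e_def T_def)
  have Tc: "T - cc > 0" using ccA_lt by (simp add: T_def)
  have Bm: "B_param d \<epsilon> \<delta> * mm = D / E"
  proof -
    have "B_param d \<epsilon> \<delta> = D / (mm * E)"
      unfolding B_eq D_def E_def e_def T_def by (simp add: algebra_simps)
    thus ?thesis using mmA_pos by simp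
  qed
  have al: "alpha_param d \<epsilon> \<delta> = (e * cc + \<delta> * cc * (T - cc)) / D"
    by (simp add: alpha_eq e_def T_def D_def)
  have om: "1 - alpha_param d \<epsilon> \<delta> = (T - cc) * (1 - \<delta> * cc) / D"
    using Dp by (simp add: al field_simps D_def)
  have t1: "alpha_param d \<epsilon> \<delta> * (B_param d \<epsilon> \<delta> * mm / cc) = (e + \<delta> * (T - cc)) / E"
    unfolding Bm al using Dp Ep ccA_pos by (simp add: field_simps)
  have t2: "(1 - alpha_param d \<epsilon> \<delta>) * (B_param d \<epsilon> \<delta> * mm / (T - cc)) = (1 - \<delta> * cc) / E"
    unfolding Bm om using Dp Ep Tc by (simp add: field_simps)
  have "(e + \<delta> * (T - cc)) / E - (1 - \<delta> * cc) / E = 1"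
  proof -
    have "(e + \<delta> * (T - cc)) - (1 - \<delta> * cc) = E" by (simp add: E_def algebra_simps)
    thus ?thesis using Ep by (simp add: diff_divide_distrib[symmetric])
  qed
  thus ?thesis using t1 t2 by (simp add: T_def)
qed

lemma B_bound:
  assumes e1': "\<epsilon> \<le> 1"
  shows "B_param d \<epsilon> \<delta> * (\<epsilon> + 2 ^ d * \<delta>) \<le> 12 * sqrt (real d)"
proof -
  define e where "e = exp \<epsilon>"
  define T :: real where "T = 2 ^ d"
  define D where "D = (e - 1) * cc + T"
  define E where "E = e - 1 + T * \<delta>"
  have e1: "e \<ge> 1 + \<epsilon>" by (simp add: e_def)
  have e3: "e \<le> 3" using exp_le e1' by (simp add: e_def) (meson exp_le exp_le_cancel_iff order_trans)
  have Ep: "E > 0" using E_pos by (simp add: E_def e_def T_def)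
  have mp: "mm > 0" by (rule mmA_pos)
  have Bd: "B_param d \<epsilon> \<delta> = D / (mm * E)"
    unfolding B_eq D_def E_def e_def T_def by (simp add: algebra_simps)
  have Dp: "D \<ge> 0" using e1 e0 ccA_pos by (simp add: D_def T_def)
  have s0: "0 \<le> \<epsilon> + 2 ^ d * \<delta>" using e0 dl0 by simp
  have sE: "\<epsilon> + 2 ^ d * \<delta> \<le> E" using e1 by (simp add: E_def T_def mult.commute)
  have "B_param d \<epsilon> \<delta> * (\<epsilon> + 2 ^ d * \<delta>) = (D / mm) * ((\<epsilon> + 2 ^ d * \<delta>) / E)"
    by (simp add: Bd)
  also have "\<dots> \<le> (D / mm) * 1"
    by (rule mult_left_mono) (use Ep sE s0 Dp mp in simp_all)
  also have "D \<le> 2 * T"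
  proof -
    have "(e - 1) * cc \<le> 2 * cc" by (rule mult_right_mono) (use e3 ccA_pos in simp_all)
    thus ?thesis using ccA_half by (simp add: D_def T_def)
  qed
  hence "(D / mm) * 1 \<le> 2 * T / mm" using mp by (simp add: divide_right_mono)
  also have "2 * T / mm \<le> 12 * sqrt (real d)"
  proof -
    have r: "T ^ 2 \<le> 32 * real d * mm ^ 2" using ratio_bound[OF d1] by (simp add: T_def mmA_def)
    have "(2 * T / mm) ^ 2 = 4 * (T ^ 2 / mm ^ 2)" by (simp add: power_divide power_mult_distrib)
    also have "T ^ 2 / mm ^ 2 \<le> 32 * real d" using r mp by (simp add: divide_le_eq)
    hence "4 * (T ^ 2 / mm ^ 2) \<le> 144 * real d" by simp
    finally have "2 * T / mm \<le> sqrt (144 * real d)" by (rule real_le_rsqrt)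
    also have "sqrt (144 * real d) = 12 * sqrt (real d)"
      by (simp add: real_sqrt_mult)
    finally show ?thesis .
  qed
  finally show ?thesis by simp
qed

end


lemma mech_set:
  assumes d1: "d \<ge> 1" and Bpos: "B > 0" and y: "y \<in> set_pmf (mech d \<alpha> B x)"
  shows "y \<in> cube d B"
proof -
  from y obtain V u where V: "V \<in> set_pmf (sign_vec d x)"
    and yin: "y \<in> set_pmf (pmf_of_set (if u then T_plus d B V else T_minus d B V))"
    unfolding mech_def by (auto simp: set_bind_pmf)
  interpret cubeloc d B V
    by unfold_locales (use Bpos sign_vec_vals[OF V] in auto)
  have AP: "{..<d} \<in> Aset d" using d1 by (auto simp: Aset_def)
  have AM: "{} \<in> Pow {..<d} - Aset d" by (auto simp: Aset_def)
  have Tp: "T_plus d B V \<noteq> {}" "finite (T_plus d B V)"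
    using AP by (auto simp: T_plus_eq finite_Aset)
  have Tm: "T_minus d B V \<noteq> {}" "finite (T_minus d B V)"
    using AM by (auto simp: T_minus_eq)
  show ?thesis using yin Tp Tm by (auto simp: T_plus_def T_minus_def split: if_splits)
qed

lemma coord_tail:
  fixes d N :: nat and \<epsilon> \<delta> t :: real and x :: "nat \<Rightarrow> nat \<Rightarrow> real" and j :: nat
  assumes d1: "d \<ge> 1" and N1: "N \<ge> 1" and e0: "0 < \<epsilon>" and dl0: "0 \<le> \<delta>" and Cd: "C_const d * \<delta> < 1"
    and j: "j < d" and xb: "\<forall>i<N. \<forall>j<d. -1 \<le> x i j \<and> x i j \<le> 1" and t: "t \<ge> 0"
  shows "measure_pmf.prob (mechanism1_all d N \<epsilon> \<delta> x)
           {xs. t \<le> \<bar>coord_mean N xs j - coord_mean N x j\<bar>}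
         \<le> 2 * exp (- (real N * t^2) / (2 * (B_param d \<epsilon> \<delta>)^2))"
proof -
  define B where "B = B_param d \<epsilon> \<delta>"
  define \<alpha> where "\<alpha> = alpha_param d \<epsilon> \<delta>"
  define P where "P = mechanism1_all d N \<epsilon> \<delta> x"
  have Bpos: "B > 0" using B_pos[OF d1 e0 dl0 Cd] by (simp add: B_def)
  have a0: "0 \<le> \<alpha>" using alpha_nonneg[OF d1 e0 dl0 Cd] by (simp add: \<alpha>_def)
  have a1: "\<alpha> \<le> 1" using alpha_le1[OF d1 e0 dl0 Cd] by (simp add: \<alpha>_def)
  have key: "\<alpha> * (B * real ((d - 1) choose (d div 2)) / real (card (Aset d)))
              - (1 - \<alpha>) * (B * real ((d - 1) choose (d div 2)) / (2 ^ d - real (card (Aset d)))) = 1"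
    using key_eq[OF d1 e0 dl0 Cd] unfolding mmA_def ccA_def B_def \<alpha>_def by simp
  have comp: "map_pmf (\<lambda>f. f i) P = mech d \<alpha> B (x i)" if "i < N" for i
    using that by (simp add: P_def mechanism1_all_def Pi_pmf_component mechanism1_def \<alpha>_def B_def)
  have expt: "measure_pmf.expectation P (\<lambda>f. f i j) = x i j" if i: "i < N" for i
  proof -
    have "measure_pmf.expectation P (\<lambda>f. f i j) = measure_pmf.expectation (map_pmf (\<lambda>f. f i) P) (\<lambda>y. y j)"
      by simp
    also have "\<dots> = x i j" unfolding comp[OF i]
      by (rule mech_expect[OF d1 j Bpos a0 a1]) (use xb i j key in auto)
    finally show ?thesis .
  qed
  have setP: "f i \<in> set_pmf (mech d \<alpha> B (x i))" if "f \<in> set_pmf P" "i < N" for f i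
  proof -
    have "f i \<in> set_pmf (map_pmf (\<lambda>f. f i) P)" using that(1) by simp
    thus ?thesis using comp[OF that(2)] by simp
  qed
  interpret H: Hoeffding_ineq "measure_pmf P" "{0..<N}" "\<lambda>i f. f i j" "\<lambda>_. -B" "\<lambda>_. B"
    "\<Sum>i\<in>{0..<N}. x i j"
  proof unfold_locales
    show "prob_space.indep_vars (measure_pmf P) (\<lambda>_. borel) (\<lambda>i f. f i j) {0..<N}"
      unfolding P_def mechanism1_all_def
      by (intro prob_space.indep_vars_compose2[OF _ indep_vars_Pi_pmf, where Y="\<lambda>i g. g j"])
         (auto simp: measure_pmf.prob_space_axioms)
  next
    fix i assume i: "i \<in> {0..<N}"
    show "AE f in measure_pmf P. f i j \<in> {- B..B}"
    proof (rule AE_pmfI)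
      fix f assume f: "f \<in> set_pmf P"
      have "f i \<in> set_pmf (mech d \<alpha> B (x i))" using setP[OF f] i by simp
      hence "f i \<in> cube d B" by (rule mech_set[OF d1 Bpos])
      thus "f i j \<in> {- B..B}" using j Bpos by (auto simp: cube_def PiE_def Pi_def)
    qed
  next
    show "(\<Sum>i\<in>{0..<N}. x i j) \<equiv> (\<Sum>i\<in>{0..<N}. measure_pmf.expectation P (\<lambda>f. f i j))"
      by (rule eq_reflection, rule sum.cong) (auto simp: expt)
  qed simp
  have pos: "(\<Sum>i\<in>{0..<N}. (B - - B)\<^sup>2) > 0" using N1 Bpos by simp
  have "measure_pmf.prob P {f \<in> space (measure_pmf P). real N * t \<le> \<bar>(\<Sum>i\<in>{0..<N}. f i j) - (\<Sum>i\<in>{0..<N}. x i j)\<bar>}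
        \<le> 2 * exp (- 2 * (real N * t)\<^sup>2 / (\<Sum>i\<in>{0..<N}. (B - - B)\<^sup>2))"
    by (rule H.Hoeffding_ineq_abs_ge) (use t pos in simp_all)
  moreover have "{f \<in> space (measure_pmf P). real N * t \<le> \<bar>(\<Sum>i\<in>{0..<N}. f i j) - (\<Sum>i\<in>{0..<N}. x i j)\<bar>}
     = {xs. t \<le> \<bar>coord_mean N xs j - coord_mean N x j\<bar>}"
  proof -
    have "t \<le> \<bar>coord_mean N xs j - coord_mean N x j\<bar> \<longleftrightarrow>
          real N * t \<le> \<bar>(\<Sum>i\<in>{0..<N}. xs i j) - (\<Sum>i\<in>{0..<N}. x i j)\<bar>" for xs :: "nat \<Rightarrow> nat \<Rightarrow> real"
    proof -
      have Np: "real N > 0" using N1 by simp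
      have "coord_mean N xs j - coord_mean N x j = ((\<Sum>i\<in>{0..<N}. xs i j) - (\<Sum>i\<in>{0..<N}. x i j)) / real N"
        by (simp add: coord_mean_def diff_divide_distrib atLeast0LessThan)
      hence "\<bar>coord_mean N xs j - coord_mean N x j\<bar> = \<bar>(\<Sum>i\<in>{0..<N}. xs i j) - (\<Sum>i\<in>{0..<N}. x i j)\<bar> / real N"
        using Np by simp
      thus ?thesis using Np by (simp add: le_divide_eq mult.commute)
    qed
    thus ?thesis by auto
  qed
  moreover have "- 2 * (real N * t)\<^sup>2 / (\<Sum>i\<in>{0..<N}. (B - - B)\<^sup>2) = - (real N * t^2) / (2 * B^2)"
    using N1 Bpos by (simp add: power2_eq_square field_simps)
  ultimately show ?thesis by (simp add: P_def B_def)
qed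


theorem theorem1:
  "\<exists>K>0. \<forall>(d::nat) (N::nat) (\<epsilon>::real) (\<delta>::real) (\<beta>::real) (x::nat \<Rightarrow> nat \<Rightarrow> real).
     d \<ge> 1 \<longrightarrow> N \<ge> 1 \<longrightarrow> 0 < \<epsilon> \<longrightarrow> \<epsilon> \<le> 1 \<longrightarrow> 0 \<le> \<delta> \<longrightarrow> C_const d * \<delta> < 1 \<longrightarrow>
     0 < \<beta> \<longrightarrow> \<beta> \<le> 1/2 \<longrightarrow> real N \<ge> ln (2 * real d / \<beta>) \<longrightarrow>
     (\<forall>i<N. \<forall>j<d. -1 \<le> x i j \<and> x i j \<le> 1) \<longrightarrow>
     measure_pmf.prob (mechanism1_all d N \<epsilon> \<delta> x)
       {xs. Max ((\<lambda>j. \<bar>coord_mean N xs j - coord_mean N x j\<bar>) ` {0..<d})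
            \<le> K * sqrt (real d * ln (real d / \<beta>)) / ((\<epsilon> + 2 ^ d * \<delta>) * sqrt (real N))}
       \<ge> 1 - \<beta>"
proof (intro exI[of _ "24::real"] conjI allI impI)
  show "(24::real) > 0" by simp
next
  fix d N :: nat and \<epsilon> \<delta> \<beta> :: real and x :: "nat \<Rightarrow> nat \<Rightarrow> real"
  assume d1: "d \<ge> 1" and N1: "N \<ge> 1" and e0: "0 < \<epsilon>" and e1: "\<epsilon> \<le> 1" and dl0: "0 \<le> \<delta>"
    and Cd: "C_const d * \<delta> < 1" and b0: "0 < \<beta>" and b1: "\<beta> \<le> 1/2"
    and Nln: "real N \<ge> ln (2 * real d / \<beta>)" and xb: "\<forall>i<N. \<forall>j<d. -1 \<le> x i j \<and> x i j \<le> 1"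
  define P where "P = mechanism1_all d N \<epsilon> \<delta> x"
  define B where "B = B_param d \<epsilon> \<delta>"
  define W where "W = \<epsilon> + 2 ^ d * \<delta>"
  define L1 where "L1 = ln (real d / \<beta>)"
  define L2 where "L2 = ln (2 * real d / \<beta>)"
  define R where "R = 24 * sqrt (real d * L1) / (W * sqrt (real N))"
  define s where "s = B * sqrt (2 * L2 / real N)"
  define F where "F = (\<lambda>j. {xs. s \<le> \<bar>coord_mean N xs j - coord_mean N x j\<bar>})"
  define G where "G = {xs. Max ((\<lambda>j. \<bar>coord_mean N xs j - coord_mean N x j\<bar>) ` {0..<d}) \<le> R}"
  have Bpos: "B > 0" using B_pos[OF d1 e0 dl0 Cd] by (simp add: B_def)
  have Wpos: "W > 0" using e0 dl0 by (simp add: W_def add_pos_nonneg)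
  have Np: "real N > 0" using N1 by simp
  have db: "real d / \<beta> \<ge> 2"
  proof -
    have "2 * \<beta> \<le> 1" using b1 by simp
    also have "1 \<le> real d" using d1 by simp
    finally show ?thesis using b0 by (simp add: le_divide_eq mult.commute)
  qed
  have L1ge: "L1 \<ge> ln 2" unfolding L1_def using db by simp
  have ln2: "ln (2::real) > 0" by simp
  have L2eq: "L2 = ln 2 + L1"
  proof -
    have "2 * real d / \<beta> = 2 * (real d / \<beta>)" by simp
    moreover have "real d / \<beta> > 0" using db by linarith
    ultimately show ?thesis unfolding L2_def L1_def using ln_mult[of 2 "real d / \<beta>"] d1 b0 by simp
  qed
  have L2pos: "L2 > 0" using L2eq L1ge ln2 by linarith
  have L2le: "L2 \<le> 2 * L1" using L2eq L1ge by linarith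
  have s0: "s \<ge> 0" using Bpos L2pos Np by (simp add: s_def)
  have tail: "measure_pmf.prob P (F j) \<le> \<beta> / real d" if j: "j < d" for j
  proof -
    have "measure_pmf.prob P (F j) \<le> 2 * exp (- (real N * s^2) / (2 * B^2))"
      unfolding P_def F_def B_def by (rule coord_tail[OF d1 N1 e0 dl0 Cd j xb s0])
    also have "real N * s^2 = 2 * B^2 * L2"
      using Np L2pos by (simp add: s_def power_mult_distrib)
    also have "- (2 * B^2 * L2) / (2 * B^2) = - L2" using Bpos by simp
    also have "exp (- L2) = \<beta> / (2 * real d)"
      using b0 d1 by (simp add: L2_def exp_minus exp_ln)
    finally show ?thesis by simp
  qed
  have sR: "s \<le> R"
  proof -
    have "sqrt (2 * L2) \<le> sqrt (4 * L1)" using L2le by simp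
    also have "sqrt (4 * L1) = 2 * sqrt L1" by (simp add: real_sqrt_mult)
    finally have sq: "sqrt (2 * L2) \<le> 2 * sqrt L1" .
    have BW: "B \<le> 12 * sqrt (real d) / W"
      using B_bound[OF d1 e0 dl0 Cd e1] Wpos by (simp add: B_def W_def le_divide_eq)
    have "s = B * sqrt (2 * L2) / sqrt (real N)" by (simp add: s_def real_sqrt_divide)
    also have "\<dots> \<le> (12 * sqrt (real d) / W) * (2 * sqrt L1) / sqrt (real N)"
      by (intro divide_right_mono mult_mono BW sq) (use Bpos Wpos L2pos in auto)
    also have "\<dots> = R" by (simp add: R_def real_sqrt_mult)
    finally show ?thesis .
  qed
  have cover: "UNIV \<subseteq> G \<union> (\<Union>j\<in>{..<d}. F j)"
  proof
    fix xs :: "nat \<Rightarrow> nat \<Rightarrow> real"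
    assume "xs \<in> UNIV"
    show "xs \<in> G \<union> (\<Union>j\<in>{..<d}. F j)"
    proof (cases "xs \<in> G")
      case True thus ?thesis by simp
    next
      case False
      define M where "M = Max ((\<lambda>j. \<bar>coord_mean N xs j - coord_mean N x j\<bar>) ` {0..<d})"
      have "M \<in> (\<lambda>j. \<bar>coord_mean N xs j - coord_mean N x j\<bar>) ` {0..<d}"
        unfolding M_def by (rule Max_in) (use d1 in auto)
      then obtain j where j: "j < d" and Mj: "M = \<bar>coord_mean N xs j - coord_mean N x j\<bar>" by auto
      have "M > R" using False by (simp add: G_def M_def)
      hence "xs \<in> F j" using sR Mj by (simp add: F_def)
      thus ?thesis using j by auto
    qed
  qed
  have "1 = measure_pmf.prob P UNIV" by simp
  also have "\<dots> \<le> measure_pmf.prob P (G \<union> (\<Union>j\<in>{..<d}. F j))"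
    using cover by (intro measure_pmf.finite_measure_mono) auto
  also have "\<dots> \<le> measure_pmf.prob P G + measure_pmf.prob P (\<Union>j\<in>{..<d}. F j)"
    by (rule measure_subadditive) auto
  also have "measure_pmf.prob P (\<Union>j\<in>{..<d}. F j) \<le> (\<Sum>j<d. measure_pmf.prob P (F j))"
    by (rule measure_pmf.finite_measure_subadditive_finite) auto
  also have "\<dots> \<le> (\<Sum>j<d. \<beta> / real d)" by (intro sum_mono tail) auto
  also have "\<dots> = \<beta>" using d1 by simp
  finally have "1 - \<beta> \<le> measure_pmf.prob P G" by simp
  thus "measure_pmf.prob (mechanism1_all d N \<epsilon> \<delta> x)
       {xs. Max ((\<lambda>j. \<bar>coord_mean N xs j - coord_mean N x j\<bar>) ` {0..<d})
            \<le> 24 * sqrt (real d * ln (real d / \<beta>)) / ((\<epsilon> + 2 ^ d * \<delta>) * sqrt (real N))}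
       \<ge> 1 - \<beta>"
    by (simp add: P_def G_def R_def W_def L1_def)
qed


end
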